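(* Let $\mathcal{X}=\{x_1,\dots,x_n\}$, $\mathcal{X}_{\mathrm{in}}\subseteq\mathcal{X}$ with $n_{\mathrm{in}}$ points, let $\mathbf{k}$ be a kernel generating $K=(\mathbf{k}(x_i,x_j))_{i,j=1}^n$, and suppose the thinning algorithm $\mathrm{Alg}$ (output $\mathcal{X}_{\mathrm{out}}$ of size $n_{\mathrm{out}}$) is $(K,\nu,\delta)$-sub-Gaussian with event $\mathcal{E}$ of probability at least $1-\delta/2$. Then for all $t\ge0$, $$\mathbb{P}\big(\mathcal{E}\cap\{\mathrm{MMD}_{\mathbf{k}}(\mathbb{P}_{\mathrm{in}},\mathbb{P}_{\mathrm{out}})\ge a+v\sqrt t\}\big)\le e^{-t},$$ with $a=\nu\sqrt e+\min_{r\le n_{\mathrm{in}}}\big\{\nu\sqrt{e^2r}+\sqrt{\lambda_{r+1}(K)(\frac1{n_{\mathrm{out}}}-\frac1{n_{\mathrm{in}}})}\big\}$ and $v=\nu\sqrt e$; that is, $\mathrm{Alg}$ is $\mathbf{k}$-sub-Gaussian on $\mathcal{E}$ with shift $a$ and parameter $v$.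
   Context: $p_{\mathrm{in},i}=\mathbf{1}\{x_i\in\mathcal{X}_{\mathrm{in}}\}/n_{\mathrm{in}}$, $q_{\mathrm{out},i}=\mathbf{1}\{x_i\in\mathcal{X}_{\mathrm{out}}\}/n_{\mathrm{out}}$; $\mathbb{P}_{\mathrm{in}},\mathbb{P}_{\mathrm{out}}$ are the corresponding empirical distributions and $\mathrm{MMD}_{\mathbf{k}}(\mathbb{P}_{\mathrm{in}},\mathbb{P}_{\mathrm{out}})=\sqrt{(p_{\mathrm{in}}-q_{\mathrm{out}})^\top K(p_{\mathrm{in}}-q_{\mathrm{out}})}$. $\lambda_j(K)$ is the $j$-th largest eigenvalue of $K$, with $\lambda_{n+1}(K):=0$; $r$ ranges over nonnegative integers. $\mathrm{Alg}$ is $(K,\nu,\delta)$-sub-Gaussian if $K$ is SPSD, $\nu>0$, $\delta\in[0,1)$, and there is an event $\mathcal{E}$ with $\mathbb{P}(\mathcal{E})\ge1-\delta/2$ such that $\mathbb{E}[\exp(\langle u,K(p_{\mathrm{in}}-q_{\mathrm{out}})\rangle)\mathbf{1}_{\mathcal{E}}]\le\exp(\frac{\nu^2}{2}u^\top Ku)$ for all $u\in\mathbb{R}^n$. *)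

theory Defs
  imports "HOL-Analysis.Analysis" "HOL-Probability.Probability"
          "HOL-Computational_Algebra.Polynomial"
begin

definition kernel_matrix :: "('x \<Rightarrow> 'x \<Rightarrow> real) \<Rightarrow> ('n::finite \<Rightarrow> 'x) \<Rightarrow> real^'n^'n" where
  "kernel_matrix k x = (\<chi> i j. k (x i) (x j))"

definition SPSD :: "real^'n^'n \<Rightarrow> bool" where
  "SPSD K \<longleftrightarrow> transpose K = K \<and> (\<forall>u::real^'n. 0 \<le> u \<bullet> (K *v u))"

definition charpoly :: "real^'n^'n \<Rightarrow> real poly" where
  "charpoly K = det (\<chi> i j. (if i = j then [:0, 1:] else 0) - [:K $ i $ j:])"

text \<open>\<lambda>_j(K): j-th largest eigenvalue of K (counted with multiplicity, j \<ge> 1);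
  0 beyond the number of eigenvalues (so \<lambda>_{n+1}(K) = 0).\<close>
definition eig :: "real^'n^'n \<Rightarrow> nat \<Rightarrow> real" where
  "eig K j = (let ev = rev (sorted_list_of_multiset (proots (charpoly K)))
              in if 1 \<le> j \<and> j \<le> length ev then ev ! (j - 1) else 0)"

definition emp :: "'n::finite set \<Rightarrow> real^'n" where
  "emp S = (\<chi> i. (if i \<in> S then 1 else 0) / real (card S))"

definition MMD :: "real^'n^'n \<Rightarrow> real^'n \<Rightarrow> real^'n \<Rightarrow> real" where
  "MMD K p q = sqrt ((p - q) \<bullet> (K *v (p - q)))"

text \<open>(K,\<nu>,\<delta>)-sub-Gaussian with witnessing event E: algorithm output Xout on the
  probability space M, input index set Xin.\<close>
definition sub_gaussian_event ::
  "'a measure \<Rightarrow> 'n::finite set \<Rightarrow> ('a \<Rightarrow> 'n set) \<Rightarrow> real^'n^'n \<Rightarrow> real \<Rightarrow> real \<Rightarrow> 'a set \<Rightarrow> bool" where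
  "sub_gaussian_event M Xin Xout K \<nu> \<delta> E \<longleftrightarrow>
     SPSD K \<and> \<nu> > 0 \<and> 0 \<le> \<delta> \<and> \<delta> < 1 \<and> E \<in> sets M \<and>
     measure M E \<ge> 1 - \<delta> / 2 \<and>
     (\<forall>u::real^'n.
        (\<integral>\<^sup>+ \<omega>. ennreal (exp (u \<bullet> (K *v (emp Xin - emp (Xout \<omega>)))) * indicator E \<omega>) \<partial>M)
          \<le> ennreal (exp (\<nu>\<^sup>2 / 2 * (u \<bullet> (K *v u)))))"

definition alg_sub_gaussian ::
  "'a measure \<Rightarrow> 'n::finite set \<Rightarrow> ('a \<Rightarrow> 'n set) \<Rightarrow> real^'n^'n \<Rightarrow> real \<Rightarrow> real \<Rightarrow> bool" where
  "alg_sub_gaussian M Xin Xout K \<nu> \<delta> \<longleftrightarrow> (\<exists>E. sub_gaussian_event M Xin Xout K \<nu> \<delta> E)"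

definition k_sub_gaussian_on ::
  "'a measure \<Rightarrow> 'n::finite set \<Rightarrow> ('a \<Rightarrow> 'n set) \<Rightarrow> real^'n^'n \<Rightarrow> 'a set \<Rightarrow> real \<Rightarrow> real \<Rightarrow> bool" where
  "k_sub_gaussian_on M Xin Xout K E a v \<longleftrightarrow>
     (\<forall>t::real. t \<ge> 0 \<longrightarrow>
        measure M (E \<inter> {\<omega> \<in> space M. MMD K (emp Xin) (emp (Xout \<omega>)) \<ge> a + v * sqrt t})
          \<le> exp (- t))"

end

theory Submission
  imports Defs
begin


lemma nn_std_normal_1: "s > 0 \<Longrightarrow> (\<integral>\<^sup>+x. ennreal (normal_density m s x) \<partial>lborel) = 1"
  using integral_normal_density[of m s] integrable_normal_density[of m s]
  by (subst nn_integral_eq_integral) auto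

lemma gauss_lin:
  "(\<integral>\<^sup>+g. ennreal (exp (a * g) * std_normal_density g) \<partial>lborel) = ennreal (exp (a\<^sup>2/2))"
proof -
  have "\<And>g. exp (a * g) * std_normal_density g = exp (a\<^sup>2/2) * normal_density a 1 g"
    by (simp add: normal_density_def mult_exp_exp power2_eq_square algebra_simps diff_divide_distrib add_divide_distrib)
  then have "(\<integral>\<^sup>+g. ennreal (exp (a * g) * std_normal_density g) \<partial>lborel)
     = (\<integral>\<^sup>+g. ennreal (exp (a\<^sup>2/2)) * ennreal (normal_density a 1 g) \<partial>lborel)"
    by (simp add: ennreal_mult)
  also have "\<dots> = ennreal (exp (a\<^sup>2/2))"
    by (subst nn_integral_cmult) (auto simp: nn_std_normal_1[of 1])
  finally show ?thesis .
qed

lemma gauss_sq: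
  assumes "0 \<le> \<theta>" "\<theta> < 1"
  shows "(\<integral>\<^sup>+g. ennreal (exp (\<theta> * g\<^sup>2 / 2) * std_normal_density g) \<partial>lborel) = ennreal ((1 - \<theta>) powr (-1/2))"
proof -
  define s where "s = 1 / sqrt (1 - \<theta>)"
  have s: "s > 0" "s\<^sup>2 = 1 / (1 - \<theta>)" using assms by (auto simp: s_def power_divide)
  have sp: "s = (1 - \<theta>) powr (-1/2)" using assms
    by (simp add: s_def powr_minus_divide powr_half_sqrt)
  have "\<And>g. exp (\<theta> * g\<^sup>2 / 2) * std_normal_density g = s * normal_density 0 s g"
  proof -
    fix g
    have "exp (\<theta> * g\<^sup>2 / 2) * std_normal_density g = 1 / sqrt (2*pi) * exp (- ((1-\<theta>) * g\<^sup>2 / 2))"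
      by (simp add: std_normal_density_def mult_exp_exp algebra_simps diff_divide_distrib add_divide_distrib)
    moreover have "s * normal_density 0 s g = 1 / sqrt (2*pi) * exp (- ((1-\<theta>) * g\<^sup>2 / 2))"
    proof -
      have a: "sqrt (2 * pi * s\<^sup>2) = sqrt (2*pi) * s"
        by (simp only: real_sqrt_mult) (use s(1) in simp)
      have c: "1 / s\<^sup>2 = 1 - \<theta>" using s(2) assms by simp
      have "-(g - 0)\<^sup>2 / (2 * s\<^sup>2) = - (g\<^sup>2 * (1 / s\<^sup>2) / 2)" by simp
      then have b: "-(g - 0)\<^sup>2 / (2 * s\<^sup>2) = - ((1-\<theta>) * g\<^sup>2 / 2)" unfolding c by simp
      show ?thesis unfolding normal_density_def a b using s by simp
    qed
    ultimately show "exp (\<theta> * g\<^sup>2 / 2) * std_normal_density g = s * normal_density 0 s g" by simp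
  qed
  then have "(\<integral>\<^sup>+g. ennreal (exp (\<theta> * g\<^sup>2 / 2) * std_normal_density g) \<partial>lborel)
     = (\<integral>\<^sup>+g. ennreal s * ennreal (normal_density 0 s g) \<partial>lborel)"
    using s by (simp add: ennreal_mult)
  also have "\<dots> = ennreal s"
    by (subst nn_integral_cmult) (auto simp: nn_std_normal_1[OF s(1)])
  finally show ?thesis using sp by simp
qed


lemma sum_upd_lin:
  fixes s Z :: "'i \<Rightarrow> real"
  assumes "finite T" "j \<in> T" "s j = 0"
  shows "(\<Sum>i\<in>T. (s(j := x)) i * Z i) = (\<Sum>i\<in>T. s i * Z i) + x * Z j"
proof -
  have "(\<Sum>i\<in>T. (s(j := x)) i * Z i) = x * Z j + (\<Sum>i\<in>T-{j}. (s(j := x)) i * Z i)"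
    using assms by (simp add: sum.remove)
  also have "(\<Sum>i\<in>T-{j}. (s(j := x)) i * Z i) = (\<Sum>i\<in>T-{j}. s i * Z i)"
    by (rule sum.cong) auto
  also have "\<dots> = (\<Sum>i\<in>T. s i * Z i)"
    using assms by (simp add: sum.remove)
  finally show ?thesis by simp
qed

lemma sum_upd_sq:
  fixes s :: "'i \<Rightarrow> real"
  assumes "finite T" "j \<in> T" "s j = 0"
  shows "(\<Sum>i\<in>T. ((s(j := x)) i)\<^sup>2) = (\<Sum>i\<in>T. (s i)\<^sup>2) + x\<^sup>2"
proof -
  have "(\<Sum>i\<in>T. ((s(j := x)) i)\<^sup>2) = x\<^sup>2 + (\<Sum>i\<in>T-{j}. ((s(j := x)) i)\<^sup>2)"
    using assms by (simp add: sum.remove)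
  also have "(\<Sum>i\<in>T-{j}. ((s(j := x)) i)\<^sup>2) = (\<Sum>i\<in>T-{j}. (s i)\<^sup>2)"
    by (rule sum.cong) auto
  also have "\<dots> = (\<Sum>i\<in>T. (s i)\<^sup>2)"
    using assms by (simp add: sum.remove)
  finally show ?thesis by simp
qed

lemma mgf_induct:
  fixes p :: "'b \<Rightarrow> real" and Z :: "'b \<Rightarrow> 'i \<Rightarrow> real"
  assumes B: "finite B" and T: "finite T" and p: "\<And>b. b \<in> B \<Longrightarrow> p b \<ge> 0"
    and nu: "\<nu> > 0" and th: "0 \<le> \<theta>" "\<theta> < 1"
    and H: "\<And>s. (\<Sum>b\<in>B. p b * exp (\<Sum>i\<in>T. s i * Z b i)) \<le> exp (\<nu>\<^sup>2/2 * (\<Sum>i\<in>T. (s i)\<^sup>2))"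
  shows "finite J \<Longrightarrow> J \<subseteq> T \<Longrightarrow> (\<forall>i\<in>J. s i = 0) \<Longrightarrow>
    (\<Sum>b\<in>B. p b * exp ((\<Sum>i\<in>T. s i * Z b i) + \<theta>/(2*\<nu>\<^sup>2) * (\<Sum>i\<in>J. (Z b i)\<^sup>2)))
      \<le> exp (\<nu>\<^sup>2/2 * (\<Sum>i\<in>T. (s i)\<^sup>2)) * (1-\<theta>) powr (- real (card J)/2)"
proof (induction J arbitrary: s rule: finite_induct)
  case empty
  then show ?case using H[of s] th by simp
next
  case (insert j J)
  have jT: "j \<in> T" and JT: "J \<subseteq> T" using insert by auto
  have sj: "s j = 0" and sJ: "\<forall>i\<in>J. s i = 0" using insert by auto
  define a where "a = sqrt \<theta> / \<nu>"
  have a2: "\<nu>\<^sup>2 / 2 * a\<^sup>2 = \<theta> / 2" using nu th by (simp add: a_def power_divide)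
  define s' where "s' = (\<lambda>g. s(j := a * g))"
  define Q where "Q = (\<lambda>b. \<theta>/(2*\<nu>\<^sup>2) * (\<Sum>i\<in>J. (Z b i)\<^sup>2))"
  define A where "A = (\<lambda>b. (\<Sum>i\<in>T. s i * Z b i))"
  have s'J: "\<forall>i\<in>J. s' g i = 0" for g using sJ insert(2) by (auto simp: s'_def)
  have s'lin: "(\<Sum>i\<in>T. s' g i * Z b i) = A b + g * (a * Z b j)" for g b
    unfolding s'_def A_def using sum_upd_lin[where s=s and j=j and T=T and x="a*g" and Z="Z b", OF T jT sj] by (simp add: algebra_simps)
  have s'sq: "(\<Sum>i\<in>T. (s' g i)\<^sup>2) = (\<Sum>i\<in>T. (s i)\<^sup>2) + a\<^sup>2 * g\<^sup>2" for g
    unfolding s'_def using sum_upd_sq[where s=s and j=j and T=T and x="a*g", OF T jT sj] by (simp add: power_mult_distrib)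
  have sumins: "(\<Sum>i\<in>insert j J. (Z b i)\<^sup>2) = (Z b j)\<^sup>2 + (\<Sum>i\<in>J. (Z b i)\<^sup>2)" for b
    using insert by simp
  define P where "P = (1-\<theta>) powr (- real (card J)/2)"
  define C where "C = exp (\<nu>\<^sup>2/2 * (\<Sum>i\<in>T. (s i)\<^sup>2))"
  have IH: "(\<Sum>b\<in>B. p b * exp (A b + g * (a * Z b j) + Q b)) \<le> C * exp (\<theta> * g\<^sup>2 / 2) * P" for g
  proof -
    have "(\<Sum>b\<in>B. p b * exp (A b + g * (a * Z b j) + Q b))
        = (\<Sum>b\<in>B. p b * exp ((\<Sum>i\<in>T. s' g i * Z b i) + \<theta>/(2*\<nu>\<^sup>2) * (\<Sum>i\<in>J. (Z b i)\<^sup>2)))"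
      by (simp add: s'lin Q_def)
    also have "\<dots> \<le> exp (\<nu>\<^sup>2/2 * (\<Sum>i\<in>T. (s' g i)\<^sup>2)) * P"
      unfolding P_def by (rule insert.IH[OF JT s'J])
    also have "exp (\<nu>\<^sup>2/2 * (\<Sum>i\<in>T. (s' g i)\<^sup>2)) = C * exp (\<theta> * g\<^sup>2 / 2)"
      unfolding s'sq C_def using a2 by (simp add: algebra_simps mult_exp_exp[symmetric])
    finally show ?thesis .
  qed
  have tm: "ennreal (exp (A b + \<theta>/(2*\<nu>\<^sup>2) * (\<Sum>i\<in>insert j J. (Z b i)\<^sup>2)))
     = (\<integral>\<^sup>+g. ennreal (exp (A b + g * (a * Z b j) + Q b) * std_normal_density g) \<partial>lborel)" for b
  proof -
    have e: "\<theta>/(2*\<nu>\<^sup>2) * (\<Sum>i\<in>insert j J. (Z b i)\<^sup>2) = (a * Z b j)\<^sup>2 / 2 + Q b"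
      unfolding sumins Q_def using nu th by (simp add: a_def power_mult_distrib power_divide field_simps)
    have "ennreal (exp (A b + \<theta>/(2*\<nu>\<^sup>2) * (\<Sum>i\<in>insert j J. (Z b i)\<^sup>2)))
       = ennreal (exp (A b + Q b)) * ennreal (exp ((a * Z b j)\<^sup>2 / 2))"
      unfolding e by (simp add: ennreal_mult[symmetric] mult_exp_exp add.assoc add.left_commute)
    also have "\<dots> = ennreal (exp (A b + Q b)) * (\<integral>\<^sup>+g. ennreal (exp ((a * Z b j) * g) * std_normal_density g) \<partial>lborel)"
      by (simp add: gauss_lin)
    also have "\<dots> = (\<integral>\<^sup>+g. ennreal (exp (A b + Q b)) * ennreal (exp ((a * Z b j) * g) * std_normal_density g) \<partial>lborel)"
      by (subst nn_integral_cmult) auto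
    also have "\<dots> = (\<integral>\<^sup>+g. ennreal (exp (A b + g * (a * Z b j) + Q b) * std_normal_density g) \<partial>lborel)"
      by (rule nn_integral_cong) (simp add: ennreal_mult[symmetric] mult_exp_exp algebra_simps)
    finally show ?thesis .
  qed
  have "ennreal (\<Sum>b\<in>B. p b * exp (A b + \<theta>/(2*\<nu>\<^sup>2) * (\<Sum>i\<in>insert j J. (Z b i)\<^sup>2)))
      = (\<Sum>b\<in>B. ennreal (p b) * ennreal (exp (A b + \<theta>/(2*\<nu>\<^sup>2) * (\<Sum>i\<in>insert j J. (Z b i)\<^sup>2))))"
    using p by (simp add: ennreal_mult sum_ennreal[symmetric])
  also have "\<dots> = (\<Sum>b\<in>B. (\<integral>\<^sup>+g. ennreal (p b) * ennreal (exp (A b + g * (a * Z b j) + Q b) * std_normal_density g) \<partial>lborel))"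
    unfolding tm by (subst nn_integral_cmult) auto
  also have "\<dots> = (\<integral>\<^sup>+g. (\<Sum>b\<in>B. ennreal (p b) * ennreal (exp (A b + g * (a * Z b j) + Q b) * std_normal_density g)) \<partial>lborel)"
    by (subst nn_integral_sum) auto
  also have "\<dots> = (\<integral>\<^sup>+g. ennreal (\<Sum>b\<in>B. p b * exp (A b + g * (a * Z b j) + Q b)) * ennreal (std_normal_density g) \<partial>lborel)"
    by (rule nn_integral_cong) (simp add: p ennreal_mult[symmetric] sum_ennreal sum_distrib_right mult.assoc sum_nonneg)
  also have "\<dots> \<le> (\<integral>\<^sup>+g. ennreal (C * P) * ennreal (exp (\<theta> * g\<^sup>2 / 2) * std_normal_density g) \<partial>lborel)"
  proof (rule nn_integral_mono)
    fix g
    let ?S = "(\<Sum>b\<in>B. p b * exp (A b + g * (a * Z b j) + Q b))"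
    have S0: "?S \<ge> 0" using p by (intro sum_nonneg) auto
    have CP: "C \<ge> 0" "P \<ge> 0" by (auto simp: C_def P_def)
    have "?S * std_normal_density g \<le> (C * exp (\<theta> * g\<^sup>2 / 2) * P) * std_normal_density g"
      by (rule mult_right_mono[OF IH]) simp
    then have "ennreal (?S * std_normal_density g) \<le> ennreal ((C * P) * (exp (\<theta> * g\<^sup>2 / 2) * std_normal_density g))"
      by (intro ennreal_leI) (simp add: algebra_simps)
    then show "ennreal ?S * ennreal (std_normal_density g) \<le> ennreal (C * P) * ennreal (exp (\<theta> * g\<^sup>2 / 2) * std_normal_density g)"
      using S0 CP by (simp add: ennreal_mult)
  qed
  also have "\<dots> = ennreal (C * P) * ennreal ((1 - \<theta>) powr (-1/2))"
    by (subst nn_integral_cmult) (auto simp: gauss_sq th)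
  also have "\<dots> = ennreal (C * (1-\<theta>) powr (- real (card (insert j J))/2))"
  proof -
    have "P * (1 - \<theta>) powr (-1/2) = (1-\<theta>) powr (- real (card (insert j J))/2)"
      unfolding P_def using insert th by (simp add: powr_add[symmetric] add_divide_distrib diff_divide_distrib algebra_simps)
    then show ?thesis by (simp add: ennreal_mult[symmetric] mult.assoc C_def P_def)
  qed
  finally have "(\<Sum>b\<in>B. p b * exp (A b + \<theta>/(2*\<nu>\<^sup>2) * (\<Sum>i\<in>insert j J. (Z b i)\<^sup>2)))
      \<le> C * (1-\<theta>) powr (- real (card (insert j J))/2)"
    by (subst (asm) ennreal_le_iff) (auto simp: C_def)
  then show ?case by (simp add: A_def C_def)
qed



lemma symm_dot:
  fixes K :: "real^'n^'n"
  assumes "transpose K = K"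
  shows "x \<bullet> (K *v y) = (K *v x) \<bullet> y"
proof -
  have "K *v x = x v* K" using assms transpose_matrix_vector[of K x] by simp
  then show ?thesis by (simp add: dot_lmul_matrix)
qed

lemma quad_scale: "(c *\<^sub>R z) \<bullet> (K *v (c *\<^sub>R z)) = c\<^sup>2 * (z \<bullet> (K *v (z::real^'n)))"
  by (simp add: matrix_vector_mult_scaleR power2_eq_square)

lemma eigvec_exists:
  fixes K :: "real^'n^'n"
  assumes symm: "transpose K = K" and S: "subspace S" and inv: "\<And>x. x \<in> S \<Longrightarrow> K *v x \<in> S"
    and ne: "x0 \<in> S" "x0 \<noteq> 0"
  shows "\<exists>v\<in>S. norm v = 1 \<and> K *v v = (v \<bullet> (K *v v)) *\<^sub>R v"
proof -
  let ?Q = "\<lambda>z. z \<bullet> (K *v z)"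
  let ?U = "sphere 0 1 \<inter> S"
  have cU: "compact ?U" using S by (intro compact_Int_closed compact_sphere closed_subspace)
  have x0n: "x0 /\<^sub>R norm x0 \<in> ?U" using ne S by (simp add: subspace_scale)
  have cont: "continuous_on ?U ?Q"
    by (intro continuous_intros linear_continuous_on linear_linear[THEN iffD1] matrix_vector_mul_linear)
  obtain x where xU: "x \<in> ?U" and xmax: "\<And>y. y \<in> ?U \<Longrightarrow> ?Q y \<le> ?Q x"
    using continuous_attains_sup[OF cU _ cont] x0n by blast
  define l where "l = ?Q x"
  have xS: "x \<in> S" and nx: "norm x = 1" using xU by auto
  have xx: "x \<bullet> x = 1" using nx by (simp add: dot_square_norm)
  have bound: "?Q z \<le> l * (z \<bullet> z)" if zS: "z \<in> S" for z
  proof (cases "z = 0")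
    case True then show ?thesis by simp
  next
    case False
    have "z /\<^sub>R norm z \<in> ?U" using False zS S by (simp add: subspace_scale)
    then have "?Q (z /\<^sub>R norm z) \<le> l" using xmax l_def by blast
    moreover have "?Q (z /\<^sub>R norm z) = (inverse (norm z))\<^sup>2 * ?Q z" by (rule quad_scale)
    ultimately have "(1 / norm z)\<^sup>2 * ?Q z \<le> l" by (simp add: inverse_eq_divide)
    then have "?Q z \<le> l * (norm z)\<^sup>2" using False by (simp add: field_simps power_divide)
    then show ?thesis by (simp add: dot_square_norm)
  qed
  have orth: "y \<bullet> (K *v x) = 0" if yS: "y \<in> S" and yx: "y \<bullet> x = 0" for y
  proof (rule ccontr)
    define b where "b = y \<bullet> (K *v x)"
    define c where "c = l * (y \<bullet> y) - ?Q y"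
    assume "y \<bullet> (K *v x) \<noteq> 0"
    then have b0: "b \<noteq> 0" by (simp add: b_def)
    have ineq: "2 * t * b \<le> t\<^sup>2 * c" for t
    proof -
      have "x + t *\<^sub>R y \<in> S" using xS yS S by (simp add: subspace_add subspace_scale)
      then have h1: "?Q (x + t *\<^sub>R y) \<le> l * ((x + t *\<^sub>R y) \<bullet> (x + t *\<^sub>R y))" by (rule bound)
      have h2: "?Q (x + t *\<^sub>R y) = l + 2 * t * b + t\<^sup>2 * ?Q y"
      proof -
        have "x \<bullet> (K *v y) = b" using symm_dot[OF symm, of x y] by (simp add: b_def inner_commute)
        then show ?thesis
          by (simp add: matrix_vector_right_distrib matrix_vector_mult_scaleR inner_add_left inner_add_right
              l_def power2_eq_square b_def algebra_simps)
      qed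
      have h3: "(x + t *\<^sub>R y) \<bullet> (x + t *\<^sub>R y) = 1 + t\<^sup>2 * (y \<bullet> y)"
        using xx yx by (simp add: inner_add_left inner_add_right inner_commute power2_eq_square)
      have h4: "l * ((x + t *\<^sub>R y) \<bullet> (x + t *\<^sub>R y)) = l + t\<^sup>2 * (l * (y \<bullet> y))"
        unfolding h3 by (simp add: algebra_simps)
      have h5: "t\<^sup>2 * c = t\<^sup>2 * (l * (y \<bullet> y)) - t\<^sup>2 * ?Q y" by (simp add: c_def algebra_simps)
      show ?thesis using h1 h2 h4 h5 by linarith
    qed
    define m where "m = \<bar>c\<bar> + 1"
    have m0: "m > 0" by (simp add: m_def)
    have "2 * (b / m) * b \<le> (b / m)\<^sup>2 * c" by (rule ineq)
    then have "2 * b\<^sup>2 * m \<le> b\<^sup>2 * c" using m0 by (simp add: field_simps power2_eq_square)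
    then have "2 * m \<le> c" using b0 by (simp add: mult.commute mult.left_commute)
    then show False using m0 by (simp add: m_def)
  qed
  define d where "d = K *v x - l *\<^sub>R x"
  have dS: "d \<in> S" using inv[OF xS] xS S by (simp add: d_def subspace_diff subspace_scale)
  have dx: "d \<bullet> x = 0"
    using xx symm_dot[OF symm, of x x] by (simp add: d_def inner_diff_left l_def)
  have "d \<bullet> (K *v x) = 0" by (rule orth[OF dS dx])
  then have "d \<bullet> d = 0" using dx by (simp add: d_def inner_diff_right)
  then have "d = 0" by simp
  then have "K *v x = l *\<^sub>R x" by (simp add: d_def)
  then show ?thesis using xS nx by (auto simp: l_def)
qed


lemma eig_sets:
  fixes K :: "real^'n^'n"
  assumes symm: "transpose K = K"
  shows "k \<le> CARD('n) \<Longrightarrow> \<exists>B. finite B \<and> card B = k \<and>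
      (\<forall>v\<in>B. norm v = 1 \<and> K *v v = (v \<bullet> (K *v v)) *\<^sub>R v) \<and> (\<forall>u\<in>B. \<forall>v\<in>B. u \<noteq> v \<longrightarrow> u \<bullet> v = 0)"
proof (induction k)
  case 0
  then show ?case by (intro exI[of _ "{}"]) auto
next
  case (Suc k)
  then obtain B where B: "finite B" "card B = k" "\<forall>v\<in>B. norm v = 1 \<and> K *v v = (v \<bullet> (K *v v)) *\<^sub>R v"
    "\<forall>u\<in>B. \<forall>v\<in>B. u \<noteq> v \<longrightarrow> u \<bullet> v = 0" by auto
  define S where "S = {y. \<forall>x\<in>B. orthogonal x y}"
  have S: "subspace S" unfolding S_def by (rule subspace_orthogonal_to_vectors)
  have inv: "K *v y \<in> S" if "y \<in> S" for y
  proof -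
    have "b \<bullet> (K *v y) = 0" if "b \<in> B" for b
    proof -
      have "b \<bullet> (K *v y) = (K *v b) \<bullet> y" by (rule symm_dot[OF symm])
      also have "\<dots> = (b \<bullet> (K *v b)) * (b \<bullet> y)" using B(3) \<open>b \<in> B\<close> by (metis inner_scaleR_left)
      also have "b \<bullet> y = 0" using \<open>y \<in> S\<close> \<open>b \<in> B\<close> by (auto simp: S_def orthogonal_def)
      finally show ?thesis by simp
    qed
    then show ?thesis by (auto simp: S_def orthogonal_def)
  qed
  have "dim B < DIM(real^'n)"
    using dim_le_card'[OF B(1)] B(2) Suc.prems by simp
  then obtain x0 where x0: "x0 \<noteq> 0" "\<And>y. y \<in> span B \<Longrightarrow> orthogonal x0 y"
    using orthogonal_to_subspace_exists by blast
  have x0S: "x0 \<in> S" using x0(2) span_base by (auto simp: S_def orthogonal_commute)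
  obtain v where v: "v \<in> S" "norm v = 1" "K *v v = (v \<bullet> (K *v v)) *\<^sub>R v"
    using eigvec_exists[OF symm S inv x0S x0(1)] by blast
  have vB: "v \<notin> B"
  proof
    assume "v \<in> B"
    then have "v \<bullet> v = 0" using v(1) by (auto simp: S_def orthogonal_def)
    then show False using v(2) by simp
  qed
  show ?case
  proof (intro exI[of _ "insert v B"] conjI)
    show "finite (insert v B)" using B by simp
    show "card (insert v B) = Suc k" using B vB by simp
    show "\<forall>w\<in>insert v B. norm w = 1 \<and> K *v w = (w \<bullet> (K *v w)) *\<^sub>R w" using B v by auto
    show "\<forall>u\<in>insert v B. \<forall>w\<in>insert v B. u \<noteq> w \<longrightarrow> u \<bullet> w = 0"
      using B(4) v(1) by (auto simp: S_def orthogonal_def inner_commute)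
  qed
qed


definition diagm :: "('n \<Rightarrow> real) \<Rightarrow> real^'n^'n" where
  "diagm f = (\<chi> i j. if i = j then f i else 0)"

lemma diag_decomp:
  fixes A :: "real^'n^'n" and v :: "'n \<Rightarrow> real^'n"
  defines "V \<equiv> (\<chi> a i. v i $ a)"
  assumes VVt: "V ** transpose V = mat 1"
    and ev: "\<And>i. A *v v i = f i *\<^sub>R v i"
  shows "A = V ** diagm f ** transpose V"
proof -
  have "A ** V = V ** diagm f"
  proof -
    have "(A ** V) $ a $ i = (V ** diagm f) $ a $ i" for a i
    proof -
      have "(A ** V) $ a $ i = (A *v v i) $ a"
        by (simp add: matrix_matrix_mult_def matrix_vector_mult_def V_def)
      also have "\<dots> = f i * v i $ a" by (simp add: ev)
      also have "\<dots> = (V ** diagm f) $ a $ i"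
        by (simp add: matrix_matrix_mult_def diagm_def V_def if_distrib[of "\<lambda>x. _ * x"] cong: if_cong)
      finally show ?thesis .
    qed
    then show ?thesis by (simp add: vec_eq_iff)
  qed
  then have "A = (A ** V) ** transpose V"
    using VVt by (metis matrix_mul_assoc matrix_mul_rid)
  then show ?thesis using \<open>A ** V = V ** diagm f\<close> by simp
qed

lemma diag_quad: "(c::real^'n) \<bullet> (diagm f *v c) = (\<Sum>i\<in>UNIV. f i * (c $ i)\<^sup>2)"
  by (simp add: inner_vec_def matrix_vector_mult_def diagm_def power2_eq_square
          if_distrib[of "\<lambda>x. x * _"] cong: if_cong) (simp add: algebra_simps)

lemma mat_mult_vec: "mat x *v (y::real^'n) = x *\<^sub>R y"
  by (simp add: vec_eq_iff matrix_vector_mult_def mat_def if_distrib[of "\<lambda>z. z * _"] cong: if_cong)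

lemma poly_det: "poly (det A) x = det (\<chi> i j. poly (A $ i $ j) x)"
  unfolding det_def by (simp add: poly_sum poly_prod)

lemma spectral:
  fixes K :: "real^'n^'n"
  assumes symm: "transpose K = K"
  obtains v :: "'n \<Rightarrow> real^'n" and \<mu> :: "'n \<Rightarrow> real" where
    "\<And>i j. v i \<bullet> v j = (if i = j then 1 else 0)"
    "\<And>i. K *v v i = \<mu> i *\<^sub>R v i"
    "\<And>w. w \<bullet> (K *v w) = (\<Sum>i\<in>UNIV. \<mu> i * (v i \<bullet> w)\<^sup>2)"
    "\<And>w. w \<bullet> w = (\<Sum>i\<in>UNIV. (v i \<bullet> w)\<^sup>2)"
    "charpoly K = (\<Prod>i\<in>UNIV. [:- \<mu> i, 1:])"
proof -
  obtain B where B: "finite B" "card B = CARD('n)" "\<forall>v\<in>B. norm v = 1 \<and> K *v v = (v \<bullet> (K *v v)) *\<^sub>R v"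
    "\<forall>u\<in>B. \<forall>v\<in>B. u \<noteq> v \<longrightarrow> u \<bullet> v = 0"
    using eig_sets[OF symm, of "CARD('n)"] by auto
  obtain h where h: "bij_betw h (UNIV::'n set) B"
    using finite_same_card_bij[of "UNIV::'n set" B] B by auto
  define v where "v = h"
  define \<mu> where "\<mu> = (\<lambda>i. v i \<bullet> (K *v v i))"
  have vB: "v i \<in> B" for i using h by (auto simp: v_def bij_betw_def)
  have on: "v i \<bullet> v j = (if i = j then 1 else 0)" for i j
  proof (cases "i = j")
    case True then show ?thesis using B(3) vB[of i] by (simp add: dot_square_norm)
  next
    case False
    then have "v i \<noteq> v j" using h by (auto simp: v_def bij_betw_def inj_on_def)
    then show ?thesis using B(4) vB False by auto
  qed
  have ev: "K *v v i = \<mu> i *\<^sub>R v i" for i using B(3) vB[of i] by (simp add: \<mu>_def)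
  define V where "V = (\<chi> a i. v i $ a :: real^'n^'n)"
  have VtV: "transpose V ** V = mat 1"
    using on by (simp add: vec_eq_iff matrix_matrix_mult_def transpose_def mat_def inner_vec_def V_def)
  then have VVt: "V ** transpose V = mat 1" by (simp add: matrix_left_right_inverse)
  have Kd: "K = V ** diagm \<mu> ** transpose V"
    unfolding V_def by (rule diag_decomp[OF VVt[unfolded V_def] ev])
  have cw: "(transpose V *v w) $ i = v i \<bullet> w" for w i
    by (simp add: matrix_vector_mult_def transpose_def V_def inner_vec_def)
  have quad: "w \<bullet> (K *v w) = (\<Sum>i\<in>UNIV. \<mu> i * (v i \<bullet> w)\<^sup>2)" for w
  proof -
    have "K *v w = V *v (diagm \<mu> *v (transpose V *v w))"
      unfolding Kd by (simp only: matrix_vector_mul_assoc matrix_mul_assoc)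
    then have "w \<bullet> (K *v w) = (transpose V *v w) \<bullet> (diagm \<mu> *v (transpose V *v w))"
      by (simp add: dot_lmul_matrix[symmetric])
    also have "\<dots> = (\<Sum>i\<in>UNIV. \<mu> i * ((transpose V *v w) $ i)\<^sup>2)"
      by (rule diag_quad)
    also have "\<dots> = (\<Sum>i\<in>UNIV. \<mu> i * (v i \<bullet> w)\<^sup>2)"
      by (simp only: cw)
    finally show ?thesis .
  qed
  have nrm: "w \<bullet> w = (\<Sum>i\<in>UNIV. (v i \<bullet> w)\<^sup>2)" for w
  proof -
    have "w = V *v (transpose V *v w)" by (simp only: matrix_vector_mul_assoc VVt matrix_vector_mul_lid)
    then have "w \<bullet> w = w \<bullet> (V *v (transpose V *v w))" by simp
    also have "\<dots> = (transpose V *v w) \<bullet> (transpose V *v w)"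
      by (simp add: dot_lmul_matrix[symmetric])
    also have "\<dots> = (\<Sum>i\<in>UNIV. ((transpose V *v w) $ i)\<^sup>2)"
      by (simp only: inner_vec_def power2_eq_square inner_real_def)
    also have "\<dots> = (\<Sum>i\<in>UNIV. (v i \<bullet> w)\<^sup>2)" by (simp only: cw)
    finally show ?thesis .
  qed
  have cp: "charpoly K = (\<Prod>i\<in>UNIV. [:- \<mu> i, 1:])"
  proof (rule poly_eq_poly_eq_iff[THEN iffD1], rule ext)
    fix x
    have "poly (charpoly K) x = det (mat x - K)"
      unfolding charpoly_def poly_det by (rule arg_cong[where f=det]) (simp add: vec_eq_iff mat_def)
    also have "mat x - K = V ** diagm (\<lambda>i. x - \<mu> i) ** transpose V"
      unfolding V_def
      by (rule diag_decomp[OF VVt[unfolded V_def]])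
         (simp add: matrix_vector_mult_diff_rdistrib mat_mult_vec ev algebra_simps)
    also have "det \<dots> = det (diagm (\<lambda>i. x - \<mu> i)) * (det V * det (transpose V))"
      by (simp add: det_mul)
    also have "det V * det (transpose V) = 1"
      using VVt by (metis det_mul det_I)
    also have "det (diagm (\<lambda>i. x - \<mu> i)) = (\<Prod>i\<in>UNIV. x - \<mu> i)"
      by (subst det_diagonal) (auto simp: diagm_def)
    finally show "poly (charpoly K) x = poly (\<Prod>i\<in>UNIV. [:- \<mu> i, 1:]) x"
      by (simp add: poly_prod)
  qed
  show ?thesis using that[OF on ev quad nrm cp] .
qed


lemma sum_single_mset: "finite A \<Longrightarrow> (\<Sum>i\<in>A. {#f i#}) = image_mset f (mset_set A)"
  by (induction A rule: finite_induct) auto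

lemma eig_facts:
  fixes K :: "real^'n^'n" and \<mu> :: "'n \<Rightarrow> real"
  assumes cp: "charpoly K = (\<Prod>i\<in>UNIV. [:- \<mu> i, 1:])"
  shows "eig K j \<in> insert 0 (range \<mu>)"
    and "card {i. eig K (r+1) < \<mu> i} \<le> r"
proof -
  define P where "P = image_mset \<mu> (mset_set (UNIV::'n set))"
  have pr: "proots (charpoly K) = P"
    unfolding cp P_def by (subst proots_prod) (auto simp: sum_single_mset)
  define ev where "ev = rev (sorted_list_of_multiset P)"
  have eigd: "eig K j = (if 1 \<le> j \<and> j \<le> length ev then ev ! (j - 1) else 0)" for j
    unfolding eig_def pr ev_def by (simp add: Let_def)
  have mev: "mset ev = P" by (simp add: ev_def)
  have sev: "set ev = range \<mu>" using arg_cong[OF mev, of set_mset] by (simp add: P_def)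
  show "eig K j \<in> insert 0 (range \<mu>)"
    unfolding eigd using sev by (auto simp: in_set_conv_nth[symmetric])
  have len: "length ev = CARD('n)" using arg_cong[OF mev, of size] by (simp add: P_def)
  have cnt: "length (filter Q ev) = card {i. Q (\<mu> i)}" for Q
  proof -
    have "length (filter Q ev) = size (mset (filter Q ev))" by (simp only: size_mset)
    also have "\<dots> = size (filter_mset Q P)" by (simp add: mev)
    also have "\<dots> = card {i. Q (\<mu> i)}"
      by (simp add: P_def image_mset_filter_mset_swap[symmetric])
    finally show ?thesis .
  qed
  show "card {i. eig K (r+1) < \<mu> i} \<le> r"
  proof (cases "r < length ev")
    case False
    then have "card {i. eig K (r+1) < \<mu> i} \<le> CARD('n)" by (simp add: card_mono)
    then show ?thesis using False len by simp
  next
    case True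
    define c where "c = ev ! r"
    have e: "eig K (r+1) = c" using True by (simp add: eigd c_def)
    have sl: "sorted (sorted_list_of_multiset P)" by simp
    have mono: "ev ! j \<le> c" if "r \<le> j" "j < length ev" for j
    proof -
      let ?s = "sorted_list_of_multiset P"
      have ls: "length ?s = length ev" by (simp add: ev_def)
      have "ev ! j = ?s ! (length ?s - Suc j)" using that by (simp add: ev_def rev_nth)
      moreover have "c = ?s ! (length ?s - Suc r)" using True by (simp add: c_def ev_def rev_nth)
      moreover have "?s ! (length ?s - Suc j) \<le> ?s ! (length ?s - Suc r)"
        using that ls by (intro sorted_nth_mono[OF sl]) auto
      ultimately show ?thesis by simp
    qed
    have "filter (\<lambda>x. c < x) (drop r ev) = []"
    proof -
      have "\<not> c < x" if xin: "x \<in> set (drop r ev)" for x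
      proof -
        obtain k where "k < length (drop r ev)" "x = drop r ev ! k" using xin unfolding in_set_conv_nth by blast
        then have "r + k < length ev" "x = ev ! (r + k)" by auto
        then show ?thesis using mono[of "r + k"] by auto
      qed
      then show ?thesis by (auto simp: filter_empty_conv)
    qed
    moreover have "filter (\<lambda>x. c < x) (take r ev @ drop r ev) = filter (\<lambda>x. c < x) (take r ev) @ filter (\<lambda>x. c < x) (drop r ev)"
      by (rule filter_append)
    ultimately have "length (filter (\<lambda>x. c < x) ev) = length (filter (\<lambda>x. c < x) (take r ev))"
      by simp
    also have "\<dots> \<le> length (take r ev)" by (rule length_filter_le)
    also have "\<dots> \<le> r" by simp
    finally show ?thesis using cnt[of "\<lambda>x. c < x"] e by simp
  qed
qed



lemma mv_sum: "finite A \<Longrightarrow> (K::real^'n^'n) *v (\<Sum>i\<in>A. g i) = (\<Sum>i\<in>A. K *v g i)"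
  by (induction A rule: finite_induct) (auto simp: matrix_vector_right_distrib)

lemma fin_int:
  fixes f :: "'n::finite set \<Rightarrow> real"
  assumes M: "prob_space M" and X: "Xout \<in> M \<rightarrow>\<^sub>M count_space UNIV" and E: "E \<in> sets M"
    and f: "\<And>S. f S \<ge> 0"
  shows "(\<integral>\<^sup>+\<omega>. ennreal (f (Xout \<omega>) * indicator E \<omega>) \<partial>M)
       = ennreal (\<Sum>S\<in>UNIV. f S * measure M (E \<inter> Xout -` {S} \<inter> space M))"
proof -
  interpret prob_space M by (rule M)
  have sets: "E \<inter> Xout -` {S} \<inter> space M \<in> sets M" for S
  proof -
    have "Xout -` {S} \<inter> space M \<in> sets M" by (rule measurable_sets[OF X]) simp
    then show ?thesis using E by (simp add: Int_assoc)
  qed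
  have "(\<integral>\<^sup>+\<omega>. ennreal (f (Xout \<omega>) * indicator E \<omega>) \<partial>M)
      = (\<integral>\<^sup>+\<omega>. (\<Sum>S\<in>UNIV. ennreal (f S) * indicator (E \<inter> Xout -` {S} \<inter> space M) \<omega>) \<partial>M)"
  proof (rule nn_integral_cong)
    fix \<omega> assume "\<omega> \<in> space M"
    then have "(\<Sum>S\<in>UNIV. ennreal (f S) * indicator (E \<inter> Xout -` {S} \<inter> space M) \<omega>)
        = (\<Sum>S\<in>UNIV. if S = Xout \<omega> then ennreal (f S) * indicator E \<omega> else 0)"
      by (intro sum.cong) (auto simp: indicator_def)
    also have "\<dots> = ennreal (f (Xout \<omega>)) * indicator E \<omega>" by (simp add: sum.delta')
    finally show "ennreal (f (Xout \<omega>) * indicator E \<omega>) = (\<Sum>S\<in>UNIV. ennreal (f S) * indicator (E \<inter> Xout -` {S} \<inter> space M) \<omega>)"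
      by (simp add: indicator_def)
  qed
  also have "\<dots> = (\<Sum>S\<in>UNIV. ennreal (f S) * emeasure M (E \<inter> Xout -` {S} \<inter> space M))"
    using sets by (subst nn_integral_sum) (auto simp: nn_integral_cmult_indicator)
  also have "\<dots> = ennreal (\<Sum>S\<in>UNIV. f S * measure M (E \<inter> Xout -` {S} \<inter> space M))"
    using f by (simp add: emeasure_eq_measure ennreal_mult[symmetric] sum_ennreal)
  finally show ?thesis .
qed


lemma emp_norm:
  fixes A S :: "'n::finite set"
  assumes SA: "S \<subseteq> A" and S0: "card S > 0"
  shows "(emp A - emp S) \<bullet> (emp A - emp S) = 1 / real (card S) - 1 / real (card A)"
proof -
  define a where "a = real (card A)"
  define b where "b = real (card S)"
  have le: "card S \<le> card A" using SA by (simp add: card_mono)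
  have b0: "b > 0" using S0 by (simp add: b_def)
  have a0: "a > 0" using le S0 by (simp add: a_def)
  let ?g = "\<lambda>i. ((if i \<in> A then 1 else 0) / a - (if i \<in> S then 1 else 0) / b)\<^sup>2"
  have "(emp A - emp S) \<bullet> (emp A - emp S) = (\<Sum>i\<in>UNIV. ?g i)"
    by (simp add: inner_vec_def emp_def a_def b_def power2_eq_square)
  also have "\<dots> = (\<Sum>i\<in>A. ?g i)"
    using SA by (intro sum.mono_neutral_right) auto
  also have "\<dots> = (\<Sum>i\<in>S. ?g i) + (\<Sum>i\<in>A - S. ?g i)"
    using SA by (metis (no_types, lifting) add.commute finite sum.subset_diff)
  also have "(\<Sum>i\<in>S. ?g i) = b * (1/a - 1/b)\<^sup>2"
    using SA by (subst sum.cong[of S S _ "\<lambda>_. (1/a - 1/b)\<^sup>2"]) (auto simp: b_def)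
  also have "(\<Sum>i\<in>A - S. ?g i) = (a - b) * (1/a)\<^sup>2"
  proof -
    have "(\<Sum>i\<in>A - S. ?g i) = (\<Sum>i\<in>A - S. (1/a)\<^sup>2)" by (intro sum.cong) auto
    also have "\<dots> = real (card (A - S)) * (1/a)\<^sup>2" by simp
    also have "real (card (A - S)) = a - b" using SA le by (simp add: card_Diff_subset a_def b_def of_nat_diff)
    finally show ?thesis .
  qed
  also have "b * (1/a - 1/b)\<^sup>2 + (a - b) * (1/a)\<^sup>2 = 1/b - 1/a"
    using a0 b0 by (simp add: field_simps power2_eq_square)
  finally show ?thesis by (simp add: a_def b_def)
qed


lemma numeric:
  fixes r k :: nat and t :: real
  assumes "k \<le> r"
  shows "exp (- (1 + exp 1 * real r + t)) * (1 - 2 / exp 1) powr (- real k / 2) \<le> exp (- t)"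
proof -
  define e where "e = exp (1::real)"
  have e25: "e \<ge> 5/2" using exp_lower_Taylor_quadratic[of 1] by (simp add: e_def)
  define b where "b = 1 - 2 / e"
  have b0: "b > 0" and b1: "b \<le> 1" using e25 by (auto simp: b_def field_simps)
  have "b powr (- real k / 2) \<le> b powr (- real r / 2)"
    using assms b0 b1 by (intro powr_mono') auto
  also have "\<dots> = exp (- real r / 2 * ln b)" using b0 by (simp add: powr_def)
  also have "- real r / 2 * ln b \<le> e * real r"
  proof -
    have "ln (1 / b) \<le> 1 / b - 1" using b0 by (intro ln_le_minus_one) simp
    moreover have "1 / b - 1 = 2 / (e - 2)" using e25 by (simp add: b_def field_simps)
    moreover have "2 / (e - 2) \<le> 2 * e"
    proof -
      have "(e - 5/2) * (e + 1/2) \<ge> 0" using e25 by (intro mult_nonneg_nonneg) auto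
      then have "1 \<le> e * (e - 2)" by (simp add: algebra_simps)
      then show ?thesis using e25 by (simp add: field_simps)
    qed
    ultimately have "- ln b \<le> 2 * e" using b0 by (simp add: ln_div)
    then have "real r / 2 * (- ln b) \<le> real r / 2 * (2 * e)" by (intro mult_left_mono) auto
    then show ?thesis by (simp add: algebra_simps)
  qed
  then have "exp (- real r / 2 * ln b) \<le> exp (e * real r)" by simp
  finally have "exp (- (1 + e * real r + t)) * b powr (- real k / 2) \<le> exp (- (1 + e * real r + t)) * exp (e * real r)"
    by (intro mult_left_mono) auto
  also have "\<dots> = exp (- 1 - t)"
  proof -
    have "- (1 + e * real r + t) + e * real r = - 1 - t" by simp
    then show ?thesis by (simp only: mult_exp_exp)
  qed
  also have "\<dots> \<le> exp (- t)" by simp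
  finally show ?thesis by (simp add: e_def b_def)
qed


theorem lemmaI1:
  fixes M :: "'a measure" and k :: "'x \<Rightarrow> 'x \<Rightarrow> real" and x :: "'n::finite \<Rightarrow> 'x"
    and Xin :: "'n set" and Xout :: "'a \<Rightarrow> 'n set"
    and nin nout :: nat and \<nu> \<delta> :: real and E :: "'a set"
  assumes "prob_space M"
    and "Xin \<noteq> {}" and "card Xin = nin"
    and "Xout \<in> M \<rightarrow>\<^sub>M count_space UNIV"
    and "\<And>\<omega>. \<omega> \<in> space M \<Longrightarrow> Xout \<omega> \<subseteq> Xin \<and> card (Xout \<omega>) = nout"
    and "0 < nout"
    and "sub_gaussian_event M Xin Xout (kernel_matrix k x) \<nu> \<delta> E"
  shows "k_sub_gaussian_on M Xin Xout (kernel_matrix k x) E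
           (\<nu> * sqrt (exp 1) +
              Min ((\<lambda>r. \<nu> * sqrt ((exp 1)\<^sup>2 * real r)
                        + sqrt (eig (kernel_matrix k x) (r + 1) * (1 / real nout - 1 / real nin)))
                   ` {0..nin}))
           (\<nu> * sqrt (exp 1))"
proof -
  interpret P: prob_space M by (rule assms(1))
  define K where "K = kernel_matrix k x"
  have symm: "transpose K = K" and psd: "\<And>u. 0 \<le> u \<bullet> (K *v u)" and nu: "\<nu> > 0"
    and EM: "E \<in> sets M"
    and H: "\<And>u. (\<integral>\<^sup>+ \<omega>. ennreal (exp (u \<bullet> (K *v (emp Xin - emp (Xout \<omega>)))) * indicator E \<omega>) \<partial>M)
          \<le> ennreal (exp (\<nu>\<^sup>2 / 2 * (u \<bullet> (K *v u))))"
    using assms(7) unfolding sub_gaussian_event_def SPSD_def K_def by auto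
  obtain v :: "'n \<Rightarrow> real^'n" and \<mu> where
    on: "\<And>i j. v i \<bullet> v j = (if i = j then 1 else 0)" and
    ev: "\<And>i. K *v v i = \<mu> i *\<^sub>R v i" and
    quad: "\<And>w. w \<bullet> (K *v w) = (\<Sum>i\<in>UNIV. \<mu> i * (v i \<bullet> w)\<^sup>2)" and
    nrm: "\<And>w. w \<bullet> w = (\<Sum>i\<in>UNIV. (v i \<bullet> w)\<^sup>2)" and
    cp: "charpoly K = (\<Prod>i\<in>UNIV. [:- \<mu> i, 1:])"
    using spectral[OF symm] by blast
  have mu0: "\<mu> i \<ge> 0" for i
  proof -
    have "0 \<le> v i \<bullet> (K *v v i)" by (rule psd)
    also have "\<dots> = \<mu> i" by (simp add: ev on)
    finally show ?thesis .
  qed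
  define f where "f = (\<lambda>r. \<nu> * sqrt ((exp 1)\<^sup>2 * real r)
                        + sqrt (eig K (r + 1) * (1 / real nout - 1 / real nin)))"
  have "Min (f ` {0..nin}) \<in> f ` {0..nin}" by (intro Min_in) auto
  then obtain r0 where r0: "r0 \<in> {0..nin}" and r0min: "Min (f ` {0..nin}) = f r0" by blast
  define c where "c = eig K (r0 + 1)"
  have c0: "c \<ge> 0" using eig_facts(1)[OF cp, of "r0 + 1"] mu0 by (auto simp: c_def)
  define T where "T = {i. c < \<mu> i}"
  have cardT: "card T \<le> r0" using eig_facts(2)[OF cp, of r0] by (simp add: T_def c_def)
  have muT: "i \<in> T \<Longrightarrow> \<mu> i > 0" for i using c0 by (auto simp: T_def)
  define q where "q = 1 / real nout - 1 / real nin"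
  define w where "w = (\<lambda>S. emp Xin - emp S)"
  define Z where "Z = (\<lambda>S i. sqrt (\<mu> i) * (v i \<bullet> w S))"
  define p where "p = (\<lambda>S. measure M (E \<inter> Xout -` {S} \<inter> space M))"
  have p0: "p S \<ge> 0" for S by (simp add: p_def)
  define \<theta> where "\<theta> = 2 / exp (1::real)"
  have e2: "exp (1::real) > 2" using exp_lower_Taylor_quadratic[of 1] by simp
  have th: "0 \<le> \<theta>" "\<theta> < 1" using e2 by (auto simp: \<theta>_def)

  have HZ: "(\<Sum>S\<in>UNIV. p S * exp (\<Sum>i\<in>T. s i * Z S i)) \<le> exp (\<nu>\<^sup>2/2 * (\<Sum>i\<in>T. (s i)\<^sup>2))" for s
  proof -
    define a where "a = (\<lambda>i. s i / sqrt (\<mu> i))"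
    define u where "u = (\<Sum>i\<in>T. a i *\<^sub>R v i)"
    have Ku: "K *v u = (\<Sum>i\<in>T. (a i * \<mu> i) *\<^sub>R v i)"
      by (simp add: u_def mv_sum matrix_vector_mult_scaleR ev)
    have Kuy: "(K *v u) \<bullet> y = (\<Sum>i\<in>T. a i * \<mu> i * (v i \<bullet> y))" for y
      by (simp add: Ku inner_sum_left)
    have vu: "v i \<bullet> u = a i" if "i \<in> T" for i
    proof -
      have "v i \<bullet> u = (\<Sum>j\<in>T. a j * (v i \<bullet> v j))" by (simp add: u_def inner_sum_right)
      also have "\<dots> = (\<Sum>j\<in>T. if j = i then a j else 0)" by (intro sum.cong) (auto simp: on)
      also have "\<dots> = a i" using that by simp
      finally show ?thesis .
    qed
    have uKu: "u \<bullet> (K *v u) = (\<Sum>i\<in>T. (s i)\<^sup>2)"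
    proof -
      have "u \<bullet> (K *v u) = (K *v u) \<bullet> u" by (simp add: inner_commute)
      also have "\<dots> = (\<Sum>i\<in>T. a i * \<mu> i * a i)" unfolding Kuy by (intro sum.cong refl) (simp add: vu)
      also have "\<dots> = (\<Sum>i\<in>T. (s i)\<^sup>2)"
      proof (intro sum.cong refl)
        fix i assume "i \<in> T"
        then have "\<mu> i > 0" by (rule muT)
        then show "a i * \<mu> i * a i = (s i)\<^sup>2"
          by (simp add: a_def power2_eq_square field_simps)
      qed
      finally show ?thesis .
    qed
    have uKw: "u \<bullet> (K *v w S) = (\<Sum>i\<in>T. s i * Z S i)" for S
    proof -
      have "u \<bullet> (K *v w S) = (K *v u) \<bullet> w S" by (rule symm_dot[OF symm])
      also have "\<dots> = (\<Sum>i\<in>T. s i * Z S i)" unfolding Kuy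
      proof (intro sum.cong refl)
        fix i assume "i \<in> T"
        then have m: "\<mu> i > 0" by (rule muT)
        have sq: "\<mu> i = sqrt (\<mu> i) * sqrt (\<mu> i)" using m by simp
        have sp: "sqrt (\<mu> i) > 0" using m by simp
        have "a i * \<mu> i = s i / sqrt (\<mu> i) * (sqrt (\<mu> i) * sqrt (\<mu> i))"
          unfolding a_def using sq by simp
        also have "\<dots> = s i * sqrt (\<mu> i)" using sp by (simp add: field_simps)
        finally have "a i * \<mu> i = s i * sqrt (\<mu> i)" .
        then show "a i * \<mu> i * (v i \<bullet> w S) = s i * Z S i" by (simp add: Z_def)
      qed
      finally show ?thesis .
    qed
    have "ennreal (\<Sum>S\<in>UNIV. exp (u \<bullet> (K *v w S)) * p S)
        = (\<integral>\<^sup>+ \<omega>. ennreal (exp (u \<bullet> (K *v w (Xout \<omega>))) * indicator E \<omega>) \<partial>M)"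
      unfolding p_def by (rule fin_int[OF assms(1) assms(4) EM, symmetric]) simp
    also have "\<dots> \<le> ennreal (exp (\<nu>\<^sup>2 / 2 * (u \<bullet> (K *v u))))" using H[of u] by (simp add: w_def)
    finally have "(\<Sum>S\<in>UNIV. exp (u \<bullet> (K *v w S)) * p S) \<le> exp (\<nu>\<^sup>2 / 2 * (u \<bullet> (K *v u)))"
      by (subst (asm) ennreal_le_iff) auto
    then show ?thesis by (simp add: uKw uKu mult.commute)
  qed
  have MG: "(\<Sum>S\<in>UNIV. p S * exp (\<theta>/(2*\<nu>\<^sup>2) * (\<Sum>i\<in>T. (Z S i)\<^sup>2))) \<le> (1-\<theta>) powr (- real (card T)/2)"
    using mgf_induct[of UNIV T p \<nu> \<theta> Z T "\<lambda>_. 0", OF _ _ p0 nu th HZ] by simp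
  have minr: "Min ((\<lambda>r. \<nu> * sqrt ((exp 1)\<^sup>2 * real r)
                        + sqrt (eig K (r + 1) * (1 / real nout - 1 / real nin))) ` {0..nin}) = f r0"
    using r0min by (simp add: f_def)
  have sets: "E \<inter> Xout -` {S} \<inter> space M \<in> sets M" for S
  proof -
    have "Xout -` {S} \<inter> space M \<in> sets M" by (rule measurable_sets[OF assms(4)]) simp
    then show ?thesis using EM by (simp add: Int_assoc)
  qed
  show ?thesis unfolding k_sub_gaussian_on_def K_def[symmetric] minr
  proof (intro allI impI)
    fix t :: real assume t0: "0 \<le> t"
    define x0 where "x0 = \<nu> * sqrt (exp 1) + \<nu> * exp 1 * sqrt (real r0) + \<nu> * sqrt (exp 1) * sqrt t"
    have x00: "x0 \<ge> 0" using nu t0 by (simp add: x0_def)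
    have bnd: "\<nu> * sqrt (exp 1) + f r0 + \<nu> * sqrt (exp 1) * sqrt t = x0 + sqrt (c * q)"
      by (simp add: f_def x0_def c_def q_def real_sqrt_mult)
    define Bad where "Bad = {S. S \<subseteq> Xin \<and> card S = nout \<and> x0 + sqrt (c * q) \<le> MMD K (emp Xin) (emp S)}"
    define L where "L = 1 + exp 1 * real r0 + t"
    define Y where "Y = (\<lambda>S. \<theta>/(2*\<nu>\<^sup>2) * (\<Sum>i\<in>T. (Z S i)\<^sup>2))"
    have key: "L \<le> Y S" if SB: "S \<in> Bad" for S
    proof -
      have SX: "S \<subseteq> Xin" "card S = nout" and mm: "x0 + sqrt (c * q) \<le> MMD K (emp Xin) (emp S)"
        using SB by (auto simp: Bad_def)
      have ww: "w S \<bullet> w S = q" using emp_norm[OF SX(1)] SX(2) assms(6) assms(3) by (simp add: w_def q_def)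
      define A1 where "A1 = (\<Sum>i\<in>T. \<mu> i * (v i \<bullet> w S)\<^sup>2)"
      define A2 where "A2 = (\<Sum>i\<in>UNIV - T. \<mu> i * (v i \<bullet> w S)\<^sup>2)"
      have split: "w S \<bullet> (K *v w S) = A1 + A2"
        unfolding quad A1_def A2_def by (simp add: sum.subset_diff[of T UNIV] add.commute)
      have A10: "A1 \<ge> 0" unfolding A1_def by (intro sum_nonneg mult_nonneg_nonneg mu0) auto
      have A20: "A2 \<ge> 0" unfolding A2_def by (intro sum_nonneg mult_nonneg_nonneg mu0) auto
      have A2le: "A2 \<le> c * q"
      proof -
        have "A2 \<le> (\<Sum>i\<in>UNIV - T. c * (v i \<bullet> w S)\<^sup>2)"
          unfolding A2_def by (intro sum_mono mult_right_mono) (auto simp: T_def)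
        also have "\<dots> \<le> (\<Sum>i\<in>UNIV. c * (v i \<bullet> w S)\<^sup>2)"
          by (intro sum_mono2) (auto simp: c0)
        also have "\<dots> = c * q" by (simp add: sum_distrib_left[symmetric] nrm[symmetric] ww)
        finally show ?thesis .
      qed
      have "MMD K (emp Xin) (emp S) = sqrt (A1 + A2)" by (simp add: MMD_def split[symmetric] w_def)
      also have "\<dots> \<le> sqrt A1 + sqrt A2" by (rule sqrt_add_le_add_sqrt[OF A10 A20])
      also have "sqrt A2 \<le> sqrt (c * q)" using A2le by simp
      finally have "x0 \<le> sqrt A1" using mm by simp
      then have x0A: "x0\<^sup>2 \<le> A1" using x00 A10 by (metis power_mono real_sqrt_pow2)
      have A1Z: "A1 = (\<Sum>i\<in>T. (Z S i)\<^sup>2)"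
        unfolding A1_def Z_def by (intro sum.cong refl) (simp add: power_mult_distrib mu0)
      define \<alpha> where "\<alpha> = \<nu> * sqrt (exp 1)"
      define \<beta> where "\<beta> = \<nu> * exp 1 * sqrt (real r0)"
      define \<gamma> where "\<gamma> = \<nu> * sqrt (exp 1) * sqrt t"
      have abc: "\<alpha> \<ge> 0" "\<beta> \<ge> 0" "\<gamma> \<ge> 0" using nu t0 by (auto simp: \<alpha>_def \<beta>_def \<gamma>_def)
      have "\<alpha>\<^sup>2 + \<beta>\<^sup>2 + \<gamma>\<^sup>2 \<le> (\<alpha> + \<beta> + \<gamma>)\<^sup>2"
        using abc by (simp add: power2_eq_square algebra_simps)
      moreover have "\<alpha>\<^sup>2 + \<beta>\<^sup>2 + \<gamma>\<^sup>2 = \<nu>\<^sup>2 * exp 1 * L"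
        using t0 by (simp add: \<alpha>_def \<beta>_def \<gamma>_def L_def power_mult_distrib algebra_simps power2_eq_square)
      ultimately have "\<nu>\<^sup>2 * exp 1 * L \<le> A1" using x0A by (simp add: x0_def \<alpha>_def \<beta>_def \<gamma>_def)
      then have "\<theta>/(2*\<nu>\<^sup>2) * (\<nu>\<^sup>2 * exp 1 * L) \<le> \<theta>/(2*\<nu>\<^sup>2) * A1"
        using th by (intro mult_left_mono) auto
      moreover have "\<theta>/(2*\<nu>\<^sup>2) * (\<nu>\<^sup>2 * exp 1 * L) = L" using nu by (simp add: \<theta>_def field_simps)
      ultimately show ?thesis by (simp add: Y_def A1Z)
    qed
    have "E \<inter> {\<omega> \<in> space M. \<nu> * sqrt (exp 1) + f r0 + \<nu> * sqrt (exp 1) * sqrt t \<le> MMD K (emp Xin) (emp (Xout \<omega>))}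
        \<subseteq> (\<Union>S\<in>Bad. E \<inter> Xout -` {S} \<inter> space M)"
      using assms(5) unfolding bnd by (auto simp: Bad_def)
    then have "measure M (E \<inter> {\<omega> \<in> space M. \<nu> * sqrt (exp 1) + f r0 + \<nu> * sqrt (exp 1) * sqrt t \<le> MMD K (emp Xin) (emp (Xout \<omega>))})
        \<le> measure M (\<Union>S\<in>Bad. E \<inter> Xout -` {S} \<inter> space M)"
    proof (rule P.finite_measure_mono)
      show "(\<Union>S\<in>Bad. E \<inter> Xout -` {S} \<inter> space M) \<in> sets M"
        by (intro sets.finite_UN sets) auto
    qed
    also have "\<dots> \<le> (\<Sum>S\<in>Bad. p S)"
      unfolding p_def using sets by (intro measure_subadditive_finite) auto
    also have "\<dots> \<le> (\<Sum>S\<in>Bad. exp (- L) * (p S * exp (Y S)))"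
    proof (intro sum_mono)
      fix S assume "S \<in> Bad"
      then have "1 \<le> exp (Y S - L)" using key by simp
      then have "p S * 1 \<le> p S * exp (Y S - L)" using p0 by (intro mult_left_mono) auto
      then show "p S \<le> exp (- L) * (p S * exp (Y S))" by (simp add: exp_diff field_simps exp_minus)
    qed
    also have "\<dots> = exp (- L) * (\<Sum>S\<in>Bad. p S * exp (Y S))" by (simp add: sum_distrib_left)
    also have "\<dots> \<le> exp (- L) * (\<Sum>S\<in>UNIV. p S * exp (Y S))"
      using p0 by (intro mult_left_mono sum_mono2) auto
    also have "\<dots> \<le> exp (- L) * (1-\<theta>) powr (- real (card T)/2)"
      using MG by (intro mult_left_mono) (auto simp: Y_def)
    also have "\<dots> \<le> exp (- t)" using numeric[OF cardT, of t] by (simp add: L_def \<theta>_def)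
    finally show "measure M (E \<inter> {\<omega> \<in> space M. \<nu> * sqrt (exp 1) + f r0 + \<nu> * sqrt (exp 1) * sqrt t \<le> MMD K (emp Xin) (emp (Xout \<omega>))}) \<le> exp (- t)" .
  qed
qed

end
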